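(* Let $n\ge 2$ and let $t\in\{1,\dots,n-1\}$. A code $\mathcal{C}\subseteq\{0,1\}^{n\times n}$ is a $(t,t)$-criss-cross deletion correcting code if and only if it is a $(t,t)$-criss-cross insertion correcting code.
   Context: For a binary array $\mathbf{X}$, $\mathbb{D}_{t_r,t_c}(\mathbf{X})$ denotes the set of all arrays obtained from $\mathbf{X}$ by deleting any $t_r$ rows and any $t_c$ columns, and $\mathbb{I}_{t_r,t_c}(\mathbf{X})$ the set of all binary arrays obtained by inserting $t_r$ rows and $t_c$ columns (arbitrary binary content, arbitrary positions). A code $\mathcal{C}\subseteq\{0,1\}^{n\times n}$ is a $(t_r,t_c)$-criss-cross deletion correcting code if $\mathbb{D}_{t_r,t_c}(\mathbf{X})\cap\mathbb{D}_{t_r,t_c}(\mathbf{Y})=\emptyset$ for all distinct $\mathbf{X},\mathbf{Y}\in\mathcal{C}$; a $(t_r,t_c)$-criss-cross insertion correcting code is defined analogously with $\mathbb{I}_{t_r,t_c}$. *)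

theory Defs
  imports Main
begin

definition is_array :: "nat \<Rightarrow> nat \<Rightarrow> bool list list \<Rightarrow> bool" where
  "is_array m k X \<longleftrightarrow> length X = m \<and> (\<forall>r\<in>set X. length r = k)"

definition ncols :: "bool list list \<Rightarrow> nat" where
  "ncols X = (if X = [] then 0 else length (hd X))"

definition del_rc :: "nat set \<Rightarrow> nat set \<Rightarrow> bool list list \<Rightarrow> bool list list" where
  "del_rc R C X = map (\<lambda>r. nths r (- C)) (nths X (- R))"

definition del_ball :: "nat \<Rightarrow> nat \<Rightarrow> bool list list \<Rightarrow> bool list list set" where
  "del_ball tr tc X = {del_rc R C X | R C.
      R \<subseteq> {..<length X} \<and> card R = tr \<and> C \<subseteq> {..<ncols X} \<and> card C = tc}"

definition ins_ball :: "nat \<Rightarrow> nat \<Rightarrow> bool list list \<Rightarrow> bool list list set" where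
  "ins_ball tr tc X = {Y. \<exists>R C. is_array (length X + tr) (ncols X + tc) Y \<and>
      R \<subseteq> {..<length X + tr} \<and> card R = tr \<and>
      C \<subseteq> {..<ncols X + tc} \<and> card C = tc \<and> del_rc R C Y = X}"

definition del_code :: "nat \<Rightarrow> nat \<Rightarrow> bool list list set \<Rightarrow> bool" where
  "del_code tr tc Cd \<longleftrightarrow>
     (\<forall>X\<in>Cd. \<forall>Y\<in>Cd. X \<noteq> Y \<longrightarrow> del_ball tr tc X \<inter> del_ball tr tc Y = {})"

definition ins_code :: "nat \<Rightarrow> nat \<Rightarrow> bool list list set \<Rightarrow> bool" where
  "ins_code tr tc Cd \<longleftrightarrow>
     (\<forall>X\<in>Cd. \<forall>Y\<in>Cd. X \<noteq> Y \<longrightarrow> ins_ball tr tc X \<inter> ins_ball tr tc Y = {})"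

end

theory Submission imports Defs begin

definition mk :: "nat list \<Rightarrow> nat list \<Rightarrow> (nat \<Rightarrow> nat \<Rightarrow> bool) \<Rightarrow> bool list list" where
  "mk rs cs F = map (\<lambda>i. map (F i) cs) rs"

lemma nths_filter: "(\<forall>i<length xs. i \<in> A \<longleftrightarrow> P (xs!i)) \<Longrightarrow> nths xs A = filter P xs"
proof (induction xs arbitrary: A)
  case Nil then show ?case by simp
next
  case (Cons x xs)
  have "nths xs {j. Suc j \<in> A} = filter P xs"
    using Cons.prems by (intro Cons.IH) auto
  moreover have "0 \<in> A \<longleftrightarrow> P x" using Cons.prems by force
  ultimately show ?case by (simp add: nths_Cons)
qed

lemma del_mk: "del_rc R C (mk rs cs F) = mk (nths rs (-R)) (nths cs (-C)) F"
  unfolding del_rc_def mk_def by (simp add: nths_map)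

lemma sl_eq: "finite A \<Longrightarrow> sorted l \<Longrightarrow> distinct l \<Longrightarrow> set l = A \<Longrightarrow> sorted_list_of_set A = l"
  by (rule iffD1[OF sorted_list_of_set_unique]) (auto simp: strict_sorted_iff distinct_card)

lemma nths_upt: "nths [0..<N] (-R) = sorted_list_of_set ({..<N} - R)"
proof -
  have "nths [0..<N] (-R) = filter (\<lambda>i. i \<notin> R) [0..<N]"
    by (rule nths_filter) auto
  also have "\<dots> = sorted_list_of_set ({..<N} - R)"
    by (rule sym, rule sl_eq) (auto simp: sorted_wrt_filter)
  finally show ?thesis .
qed

lemma array_mk: "is_array n k X \<Longrightarrow> X = mk [0..<n] [0..<k] (\<lambda>i j. X!i!j)"
  unfolding is_array_def mk_def
  by (intro nth_equalityI) (auto intro!: nth_equalityI)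

lemma mk_array: "is_array (length rs) (length cs) (mk rs cs F)"
  unfolding is_array_def mk_def by auto

lemma ncols_array: "is_array n k X \<Longrightarrow> n \<ge> 1 \<Longrightarrow> ncols X = k"
  unfolding is_array_def ncols_def by (cases X) auto

lemma mk_eq_nth: "mk rs cs F = mk rs' cs' G \<Longrightarrow> i < length rs \<Longrightarrow> j < length cs \<Longrightarrow>
   F (rs!i) (cs!j) = G (rs'!i) (cs'!j)"
proof -
  assume eq: "mk rs cs F = mk rs' cs' G" and i: "i < length rs" and j: "j < length cs"
  have "length (mk rs cs F) = length (mk rs' cs' G)" by (simp only: eq)
  hence l1: "length rs' = length rs" by (simp add: mk_def)
  have "mk rs cs F ! i = mk rs' cs' G ! i" using eq by simp
  hence r: "map (F (rs!i)) cs = map (G (rs'!i)) cs'" using l1 i by (simp add: mk_def)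
  have "length (map (F (rs!i)) cs) = length (map (G (rs'!i)) cs')" by (simp only: r)
  hence l2: "length cs' = length cs" by simp
  from r have "map (F (rs!i)) cs ! j = map (G (rs'!i)) cs' ! j" by simp
  thus ?thesis using l2 j by simp
qed

lemma mk_eq_len: "mk rs cs F = mk rs' cs' G \<Longrightarrow> length rs = length rs'"
proof -
  assume eq: "mk rs cs F = mk rs' cs' G"
  have "length (mk rs cs F) = length (mk rs' cs' G)" by (simp only: eq)
  thus ?thesis by (simp add: mk_def)
qed

lemma mk_map: "mk (map p rs) (map q cs) F = mk rs cs (\<lambda>i j. F (p i) (q j))"
  unfolding mk_def by simp

lemma mk_cong: "(\<And>i j. i \<in> set rs \<Longrightarrow> j \<in> set cs \<Longrightarrow> F i j = G i j) \<Longrightarrow> mk rs cs F = mk rs cs G"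
  unfolding mk_def by auto

lemma sl_image: 
  assumes "strict_mono_on {..<n} p"
  shows "sorted_list_of_set (p ` {..<n}) = map p [0..<n]"
proof -
  have "sorted (map p [0..<n])"
    unfolding sorted_iff_nth_mono using assms
    by (auto simp: strict_mono_on_def order_le_less)
  moreover have "distinct (map p [0..<n])"
    using strict_mono_on_imp_inj_on[OF assms] by (simp add: distinct_map lessThan_atLeast0)
  ultimately show ?thesis
    by (intro sl_eq) auto
qed

definition mmatch :: "(nat \<times> nat) set \<Rightarrow> bool" where
  "mmatch M \<longleftrightarrow> (\<forall>r s r' s'. (r,s) \<in> M \<longrightarrow> (r',s') \<in> M \<longrightarrow> (r < r' \<longleftrightarrow> s < s'))"

lemma mmatch_inj1: "mmatch M \<Longrightarrow> (r,s) \<in> M \<Longrightarrow> (r,s') \<in> M \<Longrightarrow> s = s'"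
  unfolding mmatch_def by (metis linorder_neq_iff order_less_irrefl)

lemma mmatch_inj2: "mmatch M \<Longrightarrow> (r,s) \<in> M \<Longrightarrow> (r',s) \<in> M \<Longrightarrow> r = r'"
  unfolding mmatch_def by (metis linorder_neq_iff order_less_irrefl)

lemma mmatch_card: assumes "mmatch M" "M \<subseteq> {..<nx} \<times> {..<ny}" shows "card M \<le> nx"
proof -
  have "inj_on fst M" using mmatch_inj1[OF assms(1)] by (auto simp: inj_on_def)
  then have "card M = card (fst ` M)" by (simp add: card_image)
  also have "\<dots> \<le> card {..<nx}" using assms(2) by (intro card_mono) auto
  finally show ?thesis by simp
qed

lemma mmatch_sub: "mmatch M \<Longrightarrow> M' \<subseteq> M \<Longrightarrow> mmatch M'"
  unfolding mmatch_def by blast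

lemma ext_mono:
  assumes "strict_mono_on {..<x} p" "p ` {..<x} \<subseteq> {..<N}"
  shows "strict_mono_on {..<Suc x} (p(x:=N))" "(p(x:=N)) ` {..<Suc x} \<subseteq> {..<Suc N}"
proof -
  show "strict_mono_on {..<Suc x} (p(x:=N))"
  proof (rule strict_mono_onI)
    fix r s assume rs: "r \<in> {..<Suc x}" "s \<in> {..<Suc x}" "r < s"
    then have "r < x" by simp
    show "(p(x := N)) r < (p(x := N)) s"
    proof (cases "s = x")
      case True then show ?thesis using \<open>r < x\<close> assms(2) by auto
    next
      case False then have "s < x" using rs by simp
      then show ?thesis using \<open>r < x\<close> rs(3) assms(1) by (simp add: strict_mono_on_def)
    qed
  qed
  show "(p(x:=N)) ` {..<Suc x} \<subseteq> {..<Suc N}"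
    using assms(2) by (auto simp: less_Suc_eq image_subset_iff)
qed

lemma ext_lt: "p ` {..<x} \<subseteq> {..<N} \<Longrightarrow> r < x \<Longrightarrow> p r < N" by auto

lemma merge:
  assumes "mmatch M" "M \<subseteq> {..<nx} \<times> {..<ny}"
  shows "\<exists>pX pY. strict_mono_on {..<nx} pX \<and> strict_mono_on {..<ny} pY \<and>
     pX ` {..<nx} \<subseteq> {..<nx+ny-card M} \<and> pY ` {..<ny} \<subseteq> {..<nx+ny-card M} \<and>
     (\<forall>r<nx. \<forall>s<ny. pX r = pY s \<longleftrightarrow> (r,s) \<in> M)"
  using assms
proof (induction "nx+ny" arbitrary: nx ny M rule: less_induct)
  case less
  show ?case
  proof (cases "nx = 0 \<or> ny = 0")
    case True
    then have "M = {}" using less.prems(2) by auto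
    then show ?thesis using True
      by (intro exI[of _ id]) (auto simp: strict_mono_on_def)
  next
    case False
    then obtain x y where xy: "nx = Suc x" "ny = Suc y" by (metis not0_implies_Suc)
    have fin: "finite M" using less.prems(2) finite_subset by blast
    have cM: "card M \<le> nx" by (rule mmatch_card[OF less.prems])
    show ?thesis
    proof (cases "\<forall>s. (x,s) \<notin> M")
      case True
      have sub: "M \<subseteq> {..<x} \<times> {..<ny}"
      proof
        fix p assume "p \<in> M"
        moreover obtain r s where "p = (r,s)" by (cases p)
        ultimately have "p \<in> M" "p = (r,s)" by auto
        then have "r < nx" "s < ny" using less.prems(2) by auto
        moreover have "(r,s) \<in> M" using \<open>p \<in> M\<close> \<open>p = (r,s)\<close> by simp
        ultimately show "p \<in> {..<x} \<times> {..<ny}" using True xy \<open>p = (r,s)\<close>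
          by (auto simp: less_Suc_eq)
      qed
      have cM': "card M \<le> x" by (rule mmatch_card[OF less.prems(1) sub])
      from less.hyps[of x ny M] less.prems(1) sub xy obtain pX pY where
        h: "strict_mono_on {..<x} pX" "strict_mono_on {..<ny} pY"
          "pX ` {..<x} \<subseteq> {..<x+ny-card M}" "pY ` {..<ny} \<subseteq> {..<x+ny-card M}"
          "\<forall>r<x. \<forall>s<ny. pX r = pY s \<longleftrightarrow> (r,s) \<in> M" by auto
      define N' where "N' = x+ny-card M"
      have NN: "nx+ny-card M = Suc N'" unfolding N'_def using cM' xy by simp
      show ?thesis
      proof (rule exI[of _ "pX(x := N')"], rule exI[of _ pY], intro conjI)
        show "strict_mono_on {..<nx} (pX(x := N'))"
          using ext_mono(1)[OF h(1) h(3)[folded N'_def]] xy by simp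
        show "strict_mono_on {..<ny} pY" by (rule h(2))
        show "(pX(x := N')) ` {..<nx} \<subseteq> {..<nx + ny - card M}"
          unfolding NN using ext_mono(2)[OF h(1) h(3)[folded N'_def]] xy by simp
        show "pY ` {..<ny} \<subseteq> {..<nx + ny - card M}"
          unfolding NN using h(4)[folded N'_def] by auto
        show "\<forall>r<nx. \<forall>s<ny. (pX(x := N')) r = pY s \<longleftrightarrow> (r, s) \<in> M"
        proof (intro allI impI)
          fix r s assume rs: "r < nx" "s < ny"
          show "(pX(x := N')) r = pY s \<longleftrightarrow> (r, s) \<in> M"
          proof (cases "r = x")
            case True
            then show ?thesis using ext_lt[OF h(4) rs(2)] \<open>\<forall>s. (x,s) \<notin> M\<close> unfolding N'_def by auto
          next
            case False
            then have "r < x" using rs xy by simp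
            then show ?thesis using h(5) rs False by auto
          qed
        qed
      qed
    next
      case F1: False
      then obtain s0 where s0: "(x,s0) \<in> M" by blast
      show ?thesis
      proof (cases "\<forall>r. (r,y) \<notin> M")
        case True
        have sub: "M \<subseteq> {..<nx} \<times> {..<y}"
        proof
          fix p assume "p \<in> M"
          moreover obtain r s where "p = (r,s)" by (cases p)
          ultimately have "p \<in> M" "p = (r,s)" by auto
        then have "r < nx" "s < ny" using less.prems(2) by auto
        moreover have "(r,s) \<in> M" using \<open>p \<in> M\<close> \<open>p = (r,s)\<close> by simp
        ultimately show "p \<in> {..<nx} \<times> {..<y}" using True xy \<open>p = (r,s)\<close>
          by (auto simp: less_Suc_eq)
        qed
        have cM': "card M \<le> nx" by (rule cM)
        from less.hyps[of nx y M] less.prems(1) sub xy obtain pX pY where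
          h: "strict_mono_on {..<nx} pX" "strict_mono_on {..<y} pY"
            "pX ` {..<nx} \<subseteq> {..<nx+y-card M}" "pY ` {..<y} \<subseteq> {..<nx+y-card M}"
            "\<forall>r<nx. \<forall>s<y. pX r = pY s \<longleftrightarrow> (r,s) \<in> M" by auto
        define N' where "N' = nx+y-card M"
        have NN: "nx+ny-card M = Suc N'" unfolding N'_def using cM' xy by simp
        show ?thesis
        proof (rule exI[of _ pX], rule exI[of _ "pY(y := N')"], intro conjI)
          show "strict_mono_on {..<ny} (pY(y := N'))"
            using ext_mono(1)[OF h(2) h(4)[folded N'_def]] xy by simp
          show "strict_mono_on {..<nx} pX" by (rule h(1))
          show "(pY(y := N')) ` {..<ny} \<subseteq> {..<nx + ny - card M}"
            unfolding NN using ext_mono(2)[OF h(2) h(4)[folded N'_def]] xy by simp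
          show "pX ` {..<nx} \<subseteq> {..<nx + ny - card M}"
            unfolding NN using h(3)[folded N'_def] by auto
          show "\<forall>r<nx. \<forall>s<ny. pX r = (pY(y := N')) s \<longleftrightarrow> (r, s) \<in> M"
          proof (intro allI impI)
            fix r s assume rs: "r < nx" "s < ny"
            show "pX r = (pY(y := N')) s \<longleftrightarrow> (r, s) \<in> M"
            proof (cases "s = y")
              case True
              then show ?thesis using ext_lt[OF h(3) rs(1)] \<open>\<forall>r. (r,y) \<notin> M\<close> unfolding N'_def by auto
            next
              case False
              then have "s < y" using rs xy by simp
              then show ?thesis using h(5) rs False by auto
            qed
          qed
        qed
      next
        case False
        then obtain r0 where r0: "(r0,y) \<in> M" by blast
        have r0lt: "r0 < nx" "s0 < ny" using r0 s0 less.prems(2) by auto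
        have "s0 = y"
        proof (rule ccontr)
          assume "s0 \<noteq> y"
          then have "s0 < y" using r0lt xy by simp
          then have "x < r0" using less.prems(1) s0 r0 unfolding mmatch_def by blast
          then show False using r0lt xy by simp
        qed
        then have xyM: "(x,y) \<in> M" using s0 by simp
        define M' where "M' = M - {(x,y)}"
        have mm': "mmatch M'" using less.prems(1) unfolding M'_def by (rule mmatch_sub) auto
        have sub: "M' \<subseteq> {..<x} \<times> {..<y}"
        proof
          fix p assume "p \<in> M'"
          then obtain r s where p: "p = (r,s)" "(r,s) \<in> M" "(r,s) \<noteq> (x,y)" unfolding M'_def by (cases p) auto
          have "r < nx" "s < ny" using p less.prems(2) by auto
          moreover have "r \<noteq> x" using mmatch_inj1[OF less.prems(1) _ xyM] p by auto
          moreover have "s \<noteq> y" using mmatch_inj2[OF less.prems(1) _ xyM] p by auto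
          ultimately show "p \<in> {..<x} \<times> {..<y}" using xy p by auto
        qed
        have cM'': "card M' = card M - 1" unfolding M'_def using fin xyM by simp
        have cM1: "card M \<ge> 1" using fin xyM by (metis card_0_eq empty_iff less_one not_le)
        have cM2: "card M' \<le> x" by (rule mmatch_card[OF mm' sub])
        from less.hyps[of x y M'] mm' sub xy obtain pX pY where
          h: "strict_mono_on {..<x} pX" "strict_mono_on {..<y} pY"
            "pX ` {..<x} \<subseteq> {..<x+y-card M'}" "pY ` {..<y} \<subseteq> {..<x+y-card M'}"
            "\<forall>r<x. \<forall>s<y. pX r = pY s \<longleftrightarrow> (r,s) \<in> M'" by auto
        define N' where "N' = x+y-card M'"
        have NN: "nx+ny-card M = Suc N'" unfolding N'_def using cM1 cM2 cM'' xy by simp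
        show ?thesis
        proof (rule exI[of _ "pX(x := N')"], rule exI[of _ "pY(y := N')"], intro conjI)
          show "strict_mono_on {..<nx} (pX(x := N'))"
            using ext_mono(1)[OF h(1) h(3)[folded N'_def]] xy by simp
          show "strict_mono_on {..<ny} (pY(y := N'))"
            using ext_mono(1)[OF h(2) h(4)[folded N'_def]] xy by simp
          show "(pX(x := N')) ` {..<nx} \<subseteq> {..<nx + ny - card M}"
            unfolding NN using ext_mono(2)[OF h(1) h(3)[folded N'_def]] xy by simp
          show "(pY(y := N')) ` {..<ny} \<subseteq> {..<nx + ny - card M}"
            unfolding NN using ext_mono(2)[OF h(2) h(4)[folded N'_def]] xy by simp
          show "\<forall>r<nx. \<forall>s<ny. (pX(x := N')) r = (pY(y := N')) s \<longleftrightarrow> (r, s) \<in> M"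
          proof (intro allI impI)
            fix r s assume rs: "r < nx" "s < ny"
            show "(pX(x := N')) r = (pY(y := N')) s \<longleftrightarrow> (r, s) \<in> M"
            proof (cases "r = x"; cases "s = y")
              assume "r = x" "s = y" then show ?thesis using xyM by simp
            next
              assume a: "r = x" "s \<noteq> y"
              then have "s < y" using rs xy by simp
              then have "pY s < N'" using h(4) unfolding N'_def by auto
              moreover have "(r,s) \<notin> M" using a mmatch_inj1[OF less.prems(1) _ xyM] by auto
              ultimately show ?thesis using a by simp
            next
              assume a: "r \<noteq> x" "s = y"
              then have "r < x" using rs xy by simp
              then have "pX r < N'" using h(3) unfolding N'_def by auto
              moreover have "(r,s) \<notin> M" using a mmatch_inj2[OF less.prems(1) _ xyM] by auto
              ultimately show ?thesis using a by simp
            next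
              assume a: "r \<noteq> x" "s \<noteq> y"
              then have "r < x" "s < y" using rs xy by auto
              then show ?thesis using h(5) a unfolding M'_def by auto
            qed
          qed
        qed
      qed
    qed
  qed
qed


lemma embed:
  assumes "strict_mono_on {..<n} p" "p ` {..<n} \<subseteq> {..<N}"
    "strict_mono_on {..<k} q" "q ` {..<k} \<subseteq> {..<K}"
    "\<forall>r<n. \<forall>c<k. F (p r) (q c) = X!r!c" "is_array n k X"
  shows "del_rc ({..<N} - p`{..<n}) ({..<K} - q`{..<k}) (mk [0..<N] [0..<K] F) = X"
proof -
  have e1: "{..<N} - ({..<N} - p`{..<n}) = p`{..<n}" using assms(2) by auto
  have e2: "{..<K} - ({..<K} - q`{..<k}) = q`{..<k}" using assms(4) by auto
  have "del_rc ({..<N} - p`{..<n}) ({..<K} - q`{..<k}) (mk [0..<N] [0..<K] F)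
      = mk (map p [0..<n]) (map q [0..<k]) F"
    unfolding del_mk nths_upt e1 e2 sl_image[OF assms(1)] sl_image[OF assms(3)] ..
  also have "\<dots> = mk [0..<n] [0..<k] (\<lambda>i j. X!i!j)"
    unfolding mk_map using assms(5) by (intro mk_cong) auto
  also have "\<dots> = X" using array_mk[OF assms(6)] by simp
  finally show ?thesis .
qed

lemma embed_card:
  assumes "strict_mono_on {..<n} p" "p ` {..<n} \<subseteq> {..<N}"
  shows "card ({..<N} - p`{..<n}) = N - n"
proof -
  have "card (p`{..<n}) = n" using strict_mono_on_imp_inj_on[OF assms(1)] by (simp add: card_image)
  then show ?thesis using assms(2) by (simp add: card_Diff_subset)
qed

lemma sub_del:
  assumes "finite KX" "finite LX" "K' \<subseteq> KX" "L' \<subseteq> LX"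
  shows "del_rc {i. i < card KX \<and> sorted_list_of_set KX ! i \<notin> K'}
     {j. j < card LX \<and> sorted_list_of_set LX ! j \<notin> L'} (mk (sorted_list_of_set KX) (sorted_list_of_set LX) F)
    = mk (sorted_list_of_set K') (sorted_list_of_set L') F"
proof -
  have a: "nths (sorted_list_of_set KX) (- {i. i < card KX \<and> sorted_list_of_set KX ! i \<notin> K'})
     = filter (\<lambda>x. x \<in> K') (sorted_list_of_set KX)"
    by (rule nths_filter) (auto simp: assms)
  have b: "nths (sorted_list_of_set LX) (- {i. i < card LX \<and> sorted_list_of_set LX ! i \<notin> L'})
     = filter (\<lambda>x. x \<in> L') (sorted_list_of_set LX)"
    by (rule nths_filter) (auto simp: assms)
  have c: "filter (\<lambda>x. x \<in> K') (sorted_list_of_set KX) = sorted_list_of_set K'"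
    by (rule sym, rule sl_eq) (use assms finite_subset in \<open>auto simp: sorted_wrt_filter\<close>)
  have d: "filter (\<lambda>x. x \<in> L') (sorted_list_of_set LX) = sorted_list_of_set L'"
    by (rule sym, rule sl_eq) (use assms finite_subset in \<open>auto simp: sorted_wrt_filter\<close>)
  show ?thesis unfolding del_mk a b c d ..
qed

lemma sub_card:
  assumes "finite KX" "K' \<subseteq> KX"
  shows "card {i. i < card KX \<and> sorted_list_of_set KX ! i \<notin> K'} = card KX - card K'"
proof -
  have "card {i. i < card KX \<and> sorted_list_of_set KX ! i \<notin> K'}
      = length (filter (\<lambda>x. x \<notin> K') (sorted_list_of_set KX))"
    by (simp add: length_filter_conv_card assms)
  also have "\<dots> = card (set (filter (\<lambda>x. x \<notin> K') (sorted_list_of_set KX)))"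
    by (rule distinct_card[symmetric]) simp
  also have "set (filter (\<lambda>x. x \<notin> K') (sorted_list_of_set KX)) = KX - K'"
    using assms by auto
  also have "card (KX - K') = card KX - card K'"
    using assms by (meson card_Diff_subset finite_subset)
  finally show ?thesis .
qed

lemma sl_less:
  assumes "finite A" "i < card A" "j < card A"
  shows "sorted_list_of_set A ! i < sorted_list_of_set A ! j \<longleftrightarrow> i < j"
proof -
  have s: "sorted_wrt (<) (sorted_list_of_set A)" by simp
  show ?thesis
  proof
    assume h: "sorted_list_of_set A ! i < sorted_list_of_set A ! j"
    show "i < j"
    proof (rule ccontr)
      assume "\<not> i < j"
      then have "j = i \<or> j < i" by auto
      then show False
      proof
        assume "j < i"
        then have "sorted_list_of_set A ! j < sorted_list_of_set A ! i"
          using sorted_wrt_nth_less[OF s] assms by simp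
        then show False using h by simp
      qed (use h in simp)
    qed
  next
    assume "i < j"
    then show "sorted_list_of_set A ! i < sorted_list_of_set A ! j"
      using sorted_wrt_nth_less[OF s] assms by simp
  qed
qed


abbreviation sl :: "nat set \<Rightarrow> nat list" where "sl \<equiv> sorted_list_of_set"

lemma d2i:
  assumes X: "is_array n n X" and Y: "is_array n n Y" and t: "t < n"
    and W1: "W \<in> del_ball t t X" and W2: "W \<in> del_ball t t Y"
  shows "ins_ball t t X \<inter> ins_ball t t Y \<noteq> {}"
proof -
  have lX: "length X = n" "ncols X = n" using X t ncols_array[OF X] unfolding is_array_def by auto
  have lY: "length Y = n" "ncols Y = n" using Y t ncols_array[OF Y] unfolding is_array_def by auto
  define FX where "FX = (\<lambda>i j. X!i!j)"
  define FY where "FY = (\<lambda>i j. Y!i!j)"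
  have Xm: "X = mk [0..<n] [0..<n] FX" unfolding FX_def by (rule array_mk[OF X])
  have Ym: "Y = mk [0..<n] [0..<n] FY" unfolding FY_def by (rule array_mk[OF Y])
  obtain R1 C1 where h1: "R1 \<subseteq> {..<n}" "card R1 = t" "C1 \<subseteq> {..<n}" "card C1 = t" "W = del_rc R1 C1 X"
    using W1 lX unfolding del_ball_def by auto
  obtain R2 C2 where h2: "R2 \<subseteq> {..<n}" "card R2 = t" "C2 \<subseteq> {..<n}" "card C2 = t" "W = del_rc R2 C2 Y"
    using W2 lY unfolding del_ball_def by auto
  define A1 where "A1 = {..<n} - R1"
  define B1 where "B1 = {..<n} - C1"
  define A2 where "A2 = {..<n} - R2"
  define B2 where "B2 = {..<n} - C2"
  have fin: "finite A1" "finite B1" "finite A2" "finite B2" unfolding A1_def B1_def A2_def B2_def by auto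
  have sub: "A1 \<subseteq> {..<n}" "B1 \<subseteq> {..<n}" "A2 \<subseteq> {..<n}" "B2 \<subseteq> {..<n}" 
    unfolding A1_def B1_def A2_def B2_def by auto
  define m where "m = n - t"
  have cards: "card A1 = m" "card B1 = m" "card A2 = m" "card B2 = m"
    unfolding A1_def B1_def A2_def B2_def m_def using h1 h2
    by (simp_all add: card_Diff_subset finite_subset[OF _ finite_lessThan])
  have WX: "W = mk (sl A1) (sl B1) FX" unfolding h1(5) Xm del_mk nths_upt A1_def B1_def ..
  have WY: "W = mk (sl A2) (sl B2) FY" unfolding h2(5) Ym del_mk nths_upt A2_def B2_def ..
  have WW: "mk (sl A1) (sl B1) FX = mk (sl A2) (sl B2) FY" using WX WY by (rule subst)
  have agree: "FX (sl A1 ! i) (sl B1 ! j) = FY (sl A2 ! i) (sl B2 ! j)" if "i < m" "j < m" for i j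
  proof -
    have "i < length (sl A1)" "j < length (sl B1)" using that cards by simp_all
    then show ?thesis by (rule mk_eq_nth[OF WW])
  qed
  define MR where "MR = (\<lambda>i. (sl A1 ! i, sl A2 ! i)) ` {..<m}"
  define MC where "MC = (\<lambda>i. (sl B1 ! i, sl B2 ! i)) ` {..<m}"
  have mmR: "mmatch MR" unfolding mmatch_def MR_def
  proof (intro allI impI)
    fix r s r' s' assume "(r,s) \<in> (\<lambda>i. (sl A1 ! i, sl A2 ! i)) ` {..<m}"
      "(r',s') \<in> (\<lambda>i. (sl A1 ! i, sl A2 ! i)) ` {..<m}"
    then obtain i i' where "i<m" "i'<m" "r = sl A1!i" "s = sl A2 ! i" "r' = sl A1!i'" "s' = sl A2 ! i'"
      by auto
    then show "r<r' \<longleftrightarrow> s<s'" using sl_less[OF fin(1), of i i'] sl_less[OF fin(3), of i i'] cards by simp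
  qed
  have mmC: "mmatch MC" unfolding mmatch_def MC_def
  proof (intro allI impI)
    fix r s r' s' assume "(r,s) \<in> (\<lambda>i. (sl B1 ! i, sl B2 ! i)) ` {..<m}"
      "(r',s') \<in> (\<lambda>i. (sl B1 ! i, sl B2 ! i)) ` {..<m}"
    then obtain i i' where "i<m" "i'<m" "r = sl B1!i" "s = sl B2 ! i" "r' = sl B1!i'" "s' = sl B2 ! i'"
      by auto
    then show "r<r' \<longleftrightarrow> s<s'" using sl_less[OF fin(2), of i i'] sl_less[OF fin(4), of i i'] cards by simp
  qed
  have mem: "sl A ! i \<in> {..<n}" if "finite A" "A \<subseteq> {..<n}" "i < card A" for A i
  proof -
    have "sl A ! i \<in> set (sl A)" using that by (intro nth_mem) simp
    then show ?thesis using that by auto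
  qed
  have subR: "MR \<subseteq> {..<n} \<times> {..<n}" unfolding MR_def
  proof (rule image_subsetI)
    fix i assume "i \<in> {..<m}"
    then show "(sl A1 ! i, sl A2 ! i) \<in> {..<n} \<times> {..<n}"
      using mem[OF fin(1) sub(1), of i] mem[OF fin(3) sub(3), of i] cards by simp
  qed
  have subC: "MC \<subseteq> {..<n} \<times> {..<n}" unfolding MC_def
  proof (rule image_subsetI)
    fix i assume "i \<in> {..<m}"
    then show "(sl B1 ! i, sl B2 ! i) \<in> {..<n} \<times> {..<n}"
      using mem[OF fin(2) sub(2), of i] mem[OF fin(4) sub(4), of i] cards by simp
  qed
  have injR: "inj_on (\<lambda>i. (sl A1 ! i, sl A2 ! i)) {..<m}"
  proof (rule inj_onI)
    fix x y assume "x \<in> {..<m}" "y \<in> {..<m}" "(sl A1!x, sl A2!x) = (sl A1!y, sl A2!y)"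
    then have "x<card A1" "y<card A1" "sl A1 ! x = sl A1 ! y" using cards by auto
    then show "x = y" using sl_less[OF fin(1), of x y] sl_less[OF fin(1), of y x]
      by (metis linorder_neq_iff order_less_irrefl)
  qed
  have injC: "inj_on (\<lambda>i. (sl B1 ! i, sl B2 ! i)) {..<m}"
  proof (rule inj_onI)
    fix x y assume "x \<in> {..<m}" "y \<in> {..<m}" "(sl B1!x, sl B2!x) = (sl B1!y, sl B2!y)"
    then have "x<card B1" "y<card B1" "sl B1 ! x = sl B1 ! y" using cards by auto
    then show "x = y" using sl_less[OF fin(2), of x y] sl_less[OF fin(2), of y x]
      by (metis linorder_neq_iff order_less_irrefl)
  qed
  have cR: "card MR = m" unfolding MR_def using injR by (simp add: card_image)
  have cC: "card MC = m" unfolding MC_def using injC by (simp add: card_image)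
  have NN: "n + n - m = n + t" unfolding m_def using t by simp
  obtain pX pY where PP: "strict_mono_on {..<n} pX \<and> strict_mono_on {..<n} pY \<and>
     pX ` {..<n} \<subseteq> {..<n+t} \<and> pY ` {..<n} \<subseteq> {..<n+t} \<and>
     (\<forall>r<n. \<forall>s<n. pX r = pY s \<longleftrightarrow> (r,s) \<in> MR)"
    using merge[OF mmR subR] unfolding cR NN by (elim exE) (erule that)
  have P: "strict_mono_on {..<n} pX" "strict_mono_on {..<n} pY"
     "pX ` {..<n} \<subseteq> {..<n+t}" "pY ` {..<n} \<subseteq> {..<n+t}"
     "\<forall>r<n. \<forall>s<n. pX r = pY s \<longleftrightarrow> (r,s) \<in> MR"
    using PP by blast+
  obtain qX qY where QQ: "strict_mono_on {..<n} qX \<and> strict_mono_on {..<n} qY \<and>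
     qX ` {..<n} \<subseteq> {..<n+t} \<and> qY ` {..<n} \<subseteq> {..<n+t} \<and>
     (\<forall>r<n. \<forall>s<n. qX r = qY s \<longleftrightarrow> (r,s) \<in> MC)"
    using merge[OF mmC subC] unfolding cC NN by (elim exE) (erule that)
  have Q: "strict_mono_on {..<n} qX" "strict_mono_on {..<n} qY"
     "qX ` {..<n} \<subseteq> {..<n+t}" "qY ` {..<n} \<subseteq> {..<n+t}"
     "\<forall>r<n. \<forall>s<n. qX r = qY s \<longleftrightarrow> (r,s) \<in> MC"
    using QQ by blast+
  have ipX: "inj_on pX {..<n}" "inj_on pY {..<n}" "inj_on qX {..<n}" "inj_on qY {..<n}"
    using P(1,2) Q(1,2) strict_mono_on_imp_inj_on by blast+
  define FZ where "FZ = (\<lambda>p q. if p \<in> pX ` {..<n} \<and> q \<in> qX ` {..<n}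
     then FX (inv_into {..<n} pX p) (inv_into {..<n} qX q)
     else if p \<in> pY ` {..<n} \<and> q \<in> qY ` {..<n}
     then FY (inv_into {..<n} pY p) (inv_into {..<n} qY q) else False)"
  define Z where "Z = mk [0..<n+t] [0..<n+t] FZ"
  have Zarr: "is_array (n+t) (n+t) Z" unfolding Z_def using mk_array[of "[0..<n+t]" "[0..<n+t]" FZ] by simp
  have ZX: "\<forall>r<n. \<forall>c<n. FZ (pX r) (qX c) = X!r!c"
    unfolding FZ_def FX_def using ipX by (auto simp: inv_into_f_f)
  have ZY: "\<forall>s<n. \<forall>d<n. FZ (pY s) (qY d) = Y!s!d"
  proof (intro allI impI)
    fix s d assume sd: "s < n" "d < n"
    show "FZ (pY s) (qY d) = Y!s!d"
    proof (cases "pY s \<in> pX ` {..<n} \<and> qY d \<in> qX ` {..<n}")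
      case True
      then obtain r c where rc: "r < n" "c < n" "pY s = pX r" "qY d = qX c" by auto
      have "(r,s) \<in> MR" using P(5) rc(1,3) sd(1) by metis
      then obtain i where i: "i < m" "r = sl A1 ! i" "s = sl A2 ! i" unfolding MR_def by auto
      have "(c,d) \<in> MC" using Q(5) rc(2,4) sd(2) by metis
      then obtain j where j: "j < m" "c = sl B1 ! j" "d = sl B2 ! j" unfolding MC_def by auto
      have "FZ (pY s) (qY d) = FX r c"
        unfolding FZ_def using True rc ipX by (simp add: inv_into_f_f)
      also have "\<dots> = FY s d" using agree[OF i(1) j(1)] i j by simp
      finally show ?thesis unfolding FY_def .
    next
      case False
      then show ?thesis unfolding FZ_def FY_def using sd ipX by (auto simp: inv_into_f_f)
    qed
  qed
  have "Z \<in> ins_ball t t X"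
    unfolding ins_ball_def lX
  proof (intro CollectI exI conjI)
    show "is_array (n+t) (n+t) Z" by (rule Zarr)
    show "{..<n+t} - pX ` {..<n} \<subseteq> {..<n+t}" by auto
    show "{..<n+t} - qX ` {..<n} \<subseteq> {..<n+t}" by auto
    show "card ({..<n+t} - pX ` {..<n}) = t" using embed_card[OF P(1) P(3)] by simp
    show "card ({..<n+t} - qX ` {..<n}) = t" using embed_card[OF Q(1) Q(3)] by simp
    show "del_rc ({..<n+t} - pX ` {..<n}) ({..<n+t} - qX ` {..<n}) Z = X"
      unfolding Z_def by (rule embed[OF P(1) P(3) Q(1) Q(3) ZX X])
  qed
  moreover have "Z \<in> ins_ball t t Y"
    unfolding ins_ball_def lY
  proof (intro CollectI exI conjI)
    show "is_array (n+t) (n+t) Z" by (rule Zarr)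
    show "{..<n+t} - pY ` {..<n} \<subseteq> {..<n+t}" by auto
    show "{..<n+t} - qY ` {..<n} \<subseteq> {..<n+t}" by auto
    show "card ({..<n+t} - pY ` {..<n}) = t" using embed_card[OF P(2) P(4)] by simp
    show "card ({..<n+t} - qY ` {..<n}) = t" using embed_card[OF Q(2) Q(4)] by simp
    show "del_rc ({..<n+t} - pY ` {..<n}) ({..<n+t} - qY ` {..<n}) Z = Y"
      unfolding Z_def by (rule embed[OF P(2) P(4) Q(2) Q(4) ZY Y])
  qed
  ultimately have "Z \<in> ins_ball t t X \<inter> ins_ball t t Y" by (rule IntI)
  then show ?thesis by (metis empty_iff)
qed


lemma i2d:
  assumes X: "is_array n n X" and Y: "is_array n n Y" and t: "t < n"
    and Z1: "Z \<in> ins_ball t t X" and Z2: "Z \<in> ins_ball t t Y"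
  shows "del_ball t t X \<inter> del_ball t t Y \<noteq> {}"
proof -
  have lX: "length X = n" "ncols X = n" using X t ncols_array[OF X] unfolding is_array_def by auto
  have lY: "length Y = n" "ncols Y = n" using Y t ncols_array[OF Y] unfolding is_array_def by auto
  define N where "N = n + t"
  obtain R1 C1 where h1: "is_array N N Z" "R1 \<subseteq> {..<N}" "card R1 = t" "C1 \<subseteq> {..<N}" "card C1 = t"
     "del_rc R1 C1 Z = X"
    using Z1 lX unfolding ins_ball_def N_def by auto
  obtain R2 C2 where h2: "R2 \<subseteq> {..<N}" "card R2 = t" "C2 \<subseteq> {..<N}" "card C2 = t"
     "del_rc R2 C2 Z = Y"
    using Z2 lY unfolding ins_ball_def N_def by auto
  define FZ where "FZ = (\<lambda>i j. Z!i!j)"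
  have Zm: "Z = mk [0..<N] [0..<N] FZ" unfolding FZ_def by (rule array_mk[OF h1(1)])
  define KX where "KX = {..<N} - R1"
  define LX where "LX = {..<N} - C1"
  define KY where "KY = {..<N} - R2"
  define LY where "LY = {..<N} - C2"
  have fin: "finite KX" "finite LX" "finite KY" "finite LY" unfolding KX_def LX_def KY_def LY_def by auto
  have cards: "card KX = n" "card LX = n" "card KY = n" "card LY = n"
  proof -
    have f: "finite R1" "finite C1" "finite R2" "finite C2"
      using h1(2,4) h2(1,3) by (meson finite_lessThan finite_subset)+
    show "card KX = n" "card LX = n" "card KY = n" "card LY = n"
      unfolding KX_def LX_def KY_def LY_def
      using card_Diff_subset[OF f(1) h1(2)] card_Diff_subset[OF f(2) h1(4)]
        card_Diff_subset[OF f(3) h2(1)] card_Diff_subset[OF f(4) h2(3)] h1(3,5) h2(2,4)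
      unfolding N_def by simp_all
  qed
  have Xm: "X = mk (sl KX) (sl LX) FZ" unfolding h1(6)[symmetric] Zm del_mk nths_upt KX_def LX_def ..
  have Ym: "Y = mk (sl KY) (sl LY) FZ" unfolding h2(5)[symmetric] Zm del_mk nths_upt KY_def LY_def ..
  have big: "card (A \<inter> B) \<ge> n - t" if "finite A" "finite B" "card A = n" "card B = n"
     "A \<subseteq> {..<N}" "B \<subseteq> {..<N}" for A B
  proof -
    have "card (A \<union> B) + card (A \<inter> B) = card A + card B" using that card_Un_Int by metis
    moreover have "card (A \<union> B) \<le> N" using that card_mono[of "{..<N}" "A \<union> B"] by auto
    ultimately show ?thesis using that unfolding N_def by linarith
  qed
  have "card (KX \<inter> KY) \<ge> n - t" using big[OF fin(1,3) cards(1,3)] unfolding KX_def KY_def by auto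
  then obtain K' where K': "K' \<subseteq> KX \<inter> KY" "card K' = n - t" by (meson obtain_subset_with_card_n)
  have "card (LX \<inter> LY) \<ge> n - t" using big[OF fin(2,4) cards(2,4)] unfolding LX_def LY_def by auto
  then obtain L' where L': "L' \<subseteq> LX \<inter> LY" "card L' = n - t" by (meson obtain_subset_with_card_n)
  define W where "W = mk (sl K') (sl L') FZ"
  have "W \<in> del_ball t t X"
    unfolding del_ball_def lX
  proof (intro CollectI exI conjI)
    show "W = del_rc {i. i < card KX \<and> sl KX ! i \<notin> K'} {j. j < card LX \<and> sl LX ! j \<notin> L'} X"
      unfolding W_def Xm using sub_del[OF fin(1,2), of K' L' FZ] K' L' by auto
    show "{i. i < card KX \<and> sl KX ! i \<notin> K'} \<subseteq> {..<n}" using cards by auto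
    show "{i. i < card LX \<and> sl LX ! i \<notin> L'} \<subseteq> {..<n}" using cards by auto
    show "card {i. i < card KX \<and> sl KX ! i \<notin> K'} = t"
      using sub_card[OF fin(1), of K'] K' cards t by auto
    show "card {i. i < card LX \<and> sl LX ! i \<notin> L'} = t"
      using sub_card[OF fin(2), of L'] L' cards t by auto
  qed
  moreover have "W \<in> del_ball t t Y"
    unfolding del_ball_def lY
  proof (intro CollectI exI conjI)
    show "W = del_rc {i. i < card KY \<and> sl KY ! i \<notin> K'} {j. j < card LY \<and> sl LY ! j \<notin> L'} Y"
      unfolding W_def Ym using sub_del[OF fin(3,4), of K' L' FZ] K' L' by auto
    show "{i. i < card KY \<and> sl KY ! i \<notin> K'} \<subseteq> {..<n}" using cards by auto
    show "{i. i < card LY \<and> sl LY ! i \<notin> L'} \<subseteq> {..<n}" using cards by auto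
    show "card {i. i < card KY \<and> sl KY ! i \<notin> K'} = t"
      using sub_card[OF fin(3), of K'] K' cards t by auto
    show "card {i. i < card LY \<and> sl LY ! i \<notin> L'} = t"
      using sub_card[OF fin(4), of L'] L' cards t by auto
  qed
  ultimately have "W \<in> del_ball t t X \<inter> del_ball t t Y" by (rule IntI)
  then show ?thesis by (metis empty_iff)
qed

lemma equiv_balls:
  assumes "is_array n n X" "is_array n n Y" "t < n"
  shows "del_ball t t X \<inter> del_ball t t Y = {} \<longleftrightarrow> ins_ball t t X \<inter> ins_ball t t Y = {}"
proof
  assume a: "del_ball t t X \<inter> del_ball t t Y = {}"
  show "ins_ball t t X \<inter> ins_ball t t Y = {}"
  proof (rule ccontr)
    assume "ins_ball t t X \<inter> ins_ball t t Y \<noteq> {}"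
    then obtain Z where "Z \<in> ins_ball t t X" "Z \<in> ins_ball t t Y" by blast
    from i2d[OF assms this] a show False by simp
  qed
next
  assume a: "ins_ball t t X \<inter> ins_ball t t Y = {}"
  show "del_ball t t X \<inter> del_ball t t Y = {}"
  proof (rule ccontr)
    assume "del_ball t t X \<inter> del_ball t t Y \<noteq> {}"
    then obtain W where "W \<in> del_ball t t X" "W \<in> del_ball t t Y" by blast
    from d2i[OF assms this] a show False by simp
  qed
qed

theorem corollary1:
  fixes n t :: nat and Cd :: "bool list list set"
  assumes "n \<ge> 2" and "1 \<le> t" and "t \<le> n - 1"
    and "Cd \<subseteq> {X. is_array n n X}"
  shows "del_code t t Cd \<longleftrightarrow> ins_code t t Cd"
proof -
  have t: "t < n" using assms(1,3) by linarith
  have "\<forall>X\<in>Cd. \<forall>Y\<in>Cd. (del_ball t t X \<inter> del_ball t t Y = {} \<longleftrightarrow> ins_ball t t X \<inter> ins_ball t t Y = {})"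
    using equiv_balls[OF _ _ t] assms(4) by blast
  then show ?thesis unfolding del_code_def ins_code_def by blast
qed

end
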